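(* Let $\mathfrak S$ be a commutative semiring with identity. Each of the following sets of ideals of $\mathfrak S$, endowed with the ideal topology, is quasi-compact: the set of maximal ideals, the set of prime ideals, the set of strongly irreducible ideals, the set of primary ideals, the set of irreducible ideals, and the set of radical ideals.
   Context: A semiring $(\mathfrak S,+,0,\cdot,1)$ has $(\mathfrak S,+,0)$ a commutative monoid, $(\mathfrak S,\cdot,1)$ a monoid, $0r=r0=0$, and two-sided distributivity; all semirings are commutative. An ideal is a nonempty proper subset closed under addition and under multiplication by elements of $\mathfrak S$. Prime: $ab\in\mathfrak p\Rightarrow a\in\mathfrak p$ or $b\in\mathfrak p$. Maximal: not properly contained in another ideal. Primary: $xy\in\mathfrak a\Rightarrow x\in\mathfrak a$ or $y^n\in\mathfrak a$ for some $n$. Strongly irreducible: for ideals $\mathfrak a,\mathfrak b$, $\mathfrak a\cap\mathfrak b\subseteq\mathfrak s$ implies $\mathfrak a\subseteq\mathfrak s$ or $\mathfrak b\subseteq\mathfrak s$. Irreducible: $\mathfrak a\cap\mathfrak b=\mathfrak s$ implies $\mathfrak a=\mathfrak s$ or $\mathfrak b=\mathfrak s$. Radical: $\mathfrak a=\sqrt{\mathfrak a}=\{r\mid r^n\in\mathfrak a\text{ for some }n\ge1\}$. For a set $\sigma_{\mathfrak S}$ of ideals and an ideal $\mathfrak a$, $\mathfrak a^{\uparrow}=\{\mathfrak x\in\sigma_{\mathfrak S}\mid\mathfrak a\subseteq\mathfrak x\}$; the ideal topology on $\sigma_{\mathfrak S}$ has the sets $\mathfrak a^{\uparrow}$ as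 a subbasis of closed sets. *)

theory Defs
  imports "HOL-Analysis.Analysis"
begin

text \<open>A commutative semiring with identity is modelled by the type class
  combination comm_semiring_0 + comm_monoid_mult (this does not force 0 \<noteq> 1).\<close>

definition ideal :: "'a::{comm_semiring_0,comm_monoid_mult} set \<Rightarrow> bool" where
  "ideal I \<longleftrightarrow> I \<noteq> {} \<and> I \<noteq> UNIV \<and>
     (\<forall>x\<in>I. \<forall>y\<in>I. x + y \<in> I) \<and> (\<forall>r. \<forall>x\<in>I. r * x \<in> I)"

definition prime_ideal :: "'a::{comm_semiring_0,comm_monoid_mult} set \<Rightarrow> bool" where
  "prime_ideal P \<longleftrightarrow> ideal P \<and> (\<forall>a b. a * b \<in> P \<longrightarrow> a \<in> P \<or> b \<in> P)"

definition maximal_ideal :: "'a::{comm_semiring_0,comm_monoid_mult} set \<Rightarrow> bool" where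
  "maximal_ideal M \<longleftrightarrow> ideal M \<and> (\<forall>J. ideal J \<and> M \<subseteq> J \<longrightarrow> J = M)"

definition primary_ideal :: "'a::{comm_semiring_0,comm_monoid_mult} set \<Rightarrow> bool" where
  "primary_ideal A \<longleftrightarrow> ideal A \<and>
     (\<forall>x y. x * y \<in> A \<longrightarrow> x \<in> A \<or> (\<exists>n. y ^ n \<in> A))"

definition strongly_irreducible_ideal :: "'a::{comm_semiring_0,comm_monoid_mult} set \<Rightarrow> bool" where
  "strongly_irreducible_ideal S \<longleftrightarrow> ideal S \<and>
     (\<forall>A B. ideal A \<and> ideal B \<and> A \<inter> B \<subseteq> S \<longrightarrow> A \<subseteq> S \<or> B \<subseteq> S)"

definition irreducible_ideal :: "'a::{comm_semiring_0,comm_monoid_mult} set \<Rightarrow> bool" where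
  "irreducible_ideal S \<longleftrightarrow> ideal S \<and>
     (\<forall>A B. ideal A \<and> ideal B \<and> A \<inter> B = S \<longrightarrow> A = S \<or> B = S)"

definition ideal_radical :: "'a::{comm_semiring_0,comm_monoid_mult} set \<Rightarrow> 'a set" where
  "ideal_radical A = {r. \<exists>n\<ge>1. r ^ n \<in> A}"

definition radical_ideal :: "'a::{comm_semiring_0,comm_monoid_mult} set \<Rightarrow> bool" where
  "radical_ideal A \<longleftrightarrow> ideal A \<and> A = ideal_radical A"

definition up_set :: "'a set set \<Rightarrow> 'a set \<Rightarrow> 'a set set" where
  "up_set \<sigma> a = {x \<in> \<sigma>. a \<subseteq> x}"

text \<open>Ideal topology on \<sigma>: the sets a-up (a an ideal) form a subbasis of closed sets,
  i.e. their complements in \<sigma> form a subbasis of open sets (\<sigma> itself added so that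
  the carrier of the generated topology is exactly \<sigma>).\<close>
definition ideal_topology :: "'a::{comm_semiring_0,comm_monoid_mult} set set \<Rightarrow> 'a set topology" where
  "ideal_topology \<sigma> =
     topology_generated_by (insert \<sigma> {\<sigma> - up_set \<sigma> a | a. ideal a})"

end

theory Submission
  imports Defs
begin

lemma one_notin_ideal:
  fixes I :: "'a::{comm_semiring_0,comm_monoid_mult} set"
  assumes "ideal I" shows "1 \<notin> I"
proof
  assume "1 \<in> I"
  then have "\<forall>r. r * 1 \<in> I" using assms unfolding ideal_def by blast
  then have "I = UNIV" by auto
  then show False using assms unfolding ideal_def by blast
qed

lemma ideal_zero:
  fixes I :: "'a::{comm_semiring_0,comm_monoid_mult} set"
  assumes "ideal I" shows "0 \<in> I"
proof -
  obtain x where "x \<in> I" using assms unfolding ideal_def by blast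
  then have "0 * x \<in> I" using assms unfolding ideal_def by blast
  then show ?thesis by simp
qed

lemma exists_maximal:
  fixes J :: "'a::{comm_semiring_0,comm_monoid_mult} set"
  assumes J: "ideal J"
  shows "\<exists>M. maximal_ideal M \<and> J \<subseteq> M"
proof -
  let ?A = "{I. ideal I \<and> J \<subseteq> I}"
  have "\<exists>M\<in>?A. \<forall>X\<in>?A. M \<subseteq> X \<longrightarrow> X = M"
  proof (rule subset_Zorn_nonempty)
    show "?A \<noteq> {}" using J by blast
  next
    fix C assume ne: "C \<noteq> {}" and ch: "subset.chain ?A C"
    have CA: "C \<subseteq> ?A" using ch unfolding subset_chain_def by blast
    have tot: "X \<subseteq> Y \<or> Y \<subseteq> X" if "X \<in> C" "Y \<in> C" for X Y
      using ch that unfolding subset_chain_def by blast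
    have "ideal (\<Union>C)"
      unfolding ideal_def
    proof (intro conjI ballI allI)
      show "\<Union>C \<noteq> {}" using ne CA unfolding ideal_def by blast
      show "\<Union>C \<noteq> UNIV" using CA one_notin_ideal by blast
      fix x y assume "x \<in> \<Union>C" "y \<in> \<Union>C"
      then obtain X Y where XY: "X \<in> C" "Y \<in> C" "x \<in> X" "y \<in> Y" by blast
      show "x + y \<in> \<Union>C"
      proof (cases "X \<subseteq> Y")
        case True
        then show ?thesis using XY CA unfolding ideal_def by blast
      next
        case False
        then have "Y \<subseteq> X" using tot XY by blast
        then show ?thesis using XY CA unfolding ideal_def by blast
      qed
    next
      fix r x assume "x \<in> \<Union>C"
      then show "r * x \<in> \<Union>C" using CA unfolding ideal_def by blast
    qed
    moreover have "J \<subseteq> \<Union>C" using ne CA by blast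
    ultimately show "\<Union>C \<in> ?A" by blast
  qed
  then obtain M where M: "ideal M" "J \<subseteq> M" and mx: "\<forall>X\<in>?A. M \<subseteq> X \<longrightarrow> X = M" by blast
  have "maximal_ideal M" unfolding maximal_ideal_def using M mx by blast
  then show ?thesis using M by blast
qed

lemma maximal_prime:
  fixes M :: "'a::{comm_semiring_0,comm_monoid_mult} set"
  assumes mM: "maximal_ideal M" shows "prime_ideal M"
proof -
  have M: "ideal M" using mM unfolding maximal_ideal_def by blast
  have one: "\<exists>m s. m \<in> M \<and> 1 = m + s * a" if a: "a \<notin> M" for a
  proof (rule ccontr)
    assume nn: "\<not> ?thesis"
    let ?K = "{m + s * a | m s. m \<in> M}"
    have "?K \<noteq> UNIV" using nn by blast
    moreover have "?K \<noteq> {}" using ideal_zero[OF M] by blast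
    moreover have "\<forall>x\<in>?K. \<forall>y\<in>?K. x + y \<in> ?K"
    proof (intro ballI)
      fix x y assume "x \<in> ?K" "y \<in> ?K"
      then obtain m1 s1 m2 s2 where "m1 \<in> M" "m2 \<in> M" "x = m1 + s1 * a" "y = m2 + s2 * a" by blast
      moreover have "m1 + s1 * a + (m2 + s2 * a) = (m1 + m2) + (s1 + s2) * a"
        by (simp add: algebra_simps)
      moreover have "m1 + m2 \<in> M" using M \<open>m1 \<in> M\<close> \<open>m2 \<in> M\<close> unfolding ideal_def by blast
      ultimately show "x + y \<in> ?K" by blast
    qed
    moreover have "\<forall>r. \<forall>x\<in>?K. r * x \<in> ?K"
    proof (intro allI ballI)
      fix r x assume "x \<in> ?K"
      then obtain m s where "m \<in> M" "x = m + s * a" by blast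
      moreover have "r * (m + s * a) = r * m + (r * s) * a" by (simp add: algebra_simps)
      moreover have "r * m \<in> M" using M \<open>m \<in> M\<close> unfolding ideal_def by blast
      ultimately show "r * x \<in> ?K" by blast
    qed
    ultimately have "ideal ?K" unfolding ideal_def by blast
    moreover have "M \<subseteq> ?K"
    proof
      fix m assume "m \<in> M" then have "m = m + 0 * a" by simp
      with \<open>m \<in> M\<close> show "m \<in> ?K" by blast
    qed
    ultimately have "?K = M" using mM unfolding maximal_ideal_def by blast
    moreover have "a \<in> ?K"
    proof -
      have "a = 0 + 1 * a" by simp
      then show ?thesis using ideal_zero[OF M] by blast
    qed
    ultimately show False using a by blast
  qed
  have "a \<in> M \<or> b \<in> M" if ab: "a * b \<in> M" for a b
  proof (rule ccontr)
    assume "\<not> ?thesis"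
    then obtain m1 s1 m2 s2 where h: "m1 \<in> M" "1 = m1 + s1 * a" "m2 \<in> M" "1 = m2 + s2 * b"
      using one by blast
    have "(1::'a) = 1 * 1" by simp
    also have "\<dots> = (m1 + s1 * a) * (m2 + s2 * b)" using h by simp
    also have "\<dots> = m1 * (m2 + s2 * b) + ((s1 * a) * m2 + (s1 * s2) * (a * b))"
      by (simp add: algebra_simps)
    finally have eq: "(1::'a) = m1 * (m2 + s2 * b) + ((s1 * a) * m2 + (s1 * s2) * (a * b))" .
    have "m1 * (m2 + s2 * b) \<in> M" using M h unfolding ideal_def by (metis mult.commute)
    moreover have "(s1 * a) * m2 \<in> M" using M h unfolding ideal_def by blast
    moreover have "(s1 * s2) * (a * b) \<in> M" using M ab unfolding ideal_def by blast
    ultimately have "m1 * (m2 + s2 * b) + ((s1 * a) * m2 + (s1 * s2) * (a * b)) \<in> M"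
      using M unfolding ideal_def by blast
    then show False using eq one_notin_ideal[OF M] by simp
  qed
  then show ?thesis unfolding prime_ideal_def using M by blast
qed

lemma prime_pow:
  fixes P :: "'a::{comm_semiring_0,comm_monoid_mult} set"
  assumes "prime_ideal P" shows "r ^ n \<in> P \<Longrightarrow> n \<ge> 1 \<Longrightarrow> r \<in> P"
proof (induction n)
  case 0 then show ?case by simp
next
  case (Suc n)
  then have "r * r ^ n \<in> P" by simp
  then have "r \<in> P \<or> r ^ n \<in> P" using assms unfolding prime_ideal_def by blast
  then show ?case
  proof
    assume h: "r ^ n \<in> P"
    show "r \<in> P"
    proof (cases "n \<ge> 1")
      case True then show ?thesis using Suc.IH h by blast
    next
      case False then have "n = 0" by simp
      then show ?thesis using h one_notin_ideal assms unfolding prime_ideal_def by auto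
    qed
  qed
qed

lemma maximal_all:
  fixes M :: "'a::{comm_semiring_0,comm_monoid_mult} set"
  assumes mM: "maximal_ideal M"
  shows "prime_ideal M" "strongly_irreducible_ideal M" "primary_ideal M"
    "irreducible_ideal M" "radical_ideal M"
proof -
  show P: "prime_ideal M" using maximal_prime[OF mM] .
  have I: "ideal M" using mM unfolding maximal_ideal_def by blast
  show SI: "strongly_irreducible_ideal M"
    unfolding strongly_irreducible_ideal_def
  proof (intro conjI I allI impI)
    fix A B assume h: "ideal A \<and> ideal B \<and> A \<inter> B \<subseteq> M"
    show "A \<subseteq> M \<or> B \<subseteq> M"
    proof (rule ccontr)
      assume "\<not> ?thesis"
      then obtain a b where "a \<in> A" "a \<notin> M" "b \<in> B" "b \<notin> M" by blast
      moreover have "a * b \<in> A" using h \<open>a \<in> A\<close> unfolding ideal_def by (metis mult.commute)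
      moreover have "a * b \<in> B" using h \<open>b \<in> B\<close> unfolding ideal_def by blast
      ultimately show False using h P unfolding prime_ideal_def by blast
    qed
  qed
  show "primary_ideal M" unfolding primary_ideal_def
  proof (intro conjI I allI impI)
    fix x y assume "x * y \<in> M"
    then have "x \<in> M \<or> y ^ 1 \<in> M" using P unfolding prime_ideal_def by simp
    then show "x \<in> M \<or> (\<exists>n. y ^ n \<in> M)" by blast
  qed
  show "irreducible_ideal M" unfolding irreducible_ideal_def
  proof (intro conjI I allI impI)
    fix A B assume h: "ideal A \<and> ideal B \<and> A \<inter> B = M"
    then have "A \<subseteq> M \<or> B \<subseteq> M" using SI unfolding strongly_irreducible_ideal_def by blast
    then show "A = M \<or> B = M" using h by blast
  qed
  show "radical_ideal M" unfolding radical_ideal_def ideal_radical_def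
  proof (intro conjI I)
    show "M = {r. \<exists>n\<ge>1. r ^ n \<in> M}"
    proof
      show "M \<subseteq> {r. \<exists>n\<ge>1. r ^ n \<in> M}"
      proof
        fix r assume "r \<in> M" then have "r ^ 1 \<in> M" by simp
        then show "r \<in> {r. \<exists>n\<ge>1. r ^ n \<in> M}" by blast
      qed
      show "{r. \<exists>n\<ge>1. r ^ n \<in> M} \<subseteq> M" using prime_pow[OF P] by blast
    qed
  qed
qed

lemma fin_rel_eq:
  assumes "X0 \<in> S" "\<forall>s\<in>S. s \<subseteq> X0"
  shows "(finite' intersection_of (\<lambda>x. x \<in> S)) = (finite intersection_of (\<lambda>x. x \<in> S) relative_to \<Union>S)"
proof (intro ext iffI)
  have U: "\<Union>S = X0" using assms by blast
  fix T
  {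
    assume "(finite' intersection_of (\<lambda>x. x \<in> S)) T"
    then obtain U where u: "finite U" "U \<noteq> {}" "U \<subseteq> S" "\<Inter>U = T"
      unfolding intersection_of_def by auto
    have e: "X0 \<inter> \<Inter>U = \<Inter>U" using u assms by blast
    have "(finite intersection_of (\<lambda>x. x \<in> S)) (\<Inter>U)"
      unfolding intersection_of_def using u by blast
    then show "(finite intersection_of (\<lambda>x. x \<in> S) relative_to \<Union>S) T"
      unfolding relative_to_def U using e u by metis
  }
  {
    assume "(finite intersection_of (\<lambda>x. x \<in> S) relative_to \<Union>S) T"
    then obtain V U where u: "finite U" "U \<subseteq> S" "\<Inter>U = V" "X0 \<inter> V = T"
      unfolding relative_to_def intersection_of_def U by auto
    have "\<Inter>(insert X0 U) = T" using u by simp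
    moreover have "finite (insert X0 U)" "insert X0 U \<noteq> {}" "insert X0 U \<subseteq> S" using u assms by auto
    ultimately show "(finite' intersection_of (\<lambda>x. x \<in> S)) T"
      unfolding intersection_of_def by blast
  }
qed

lemma ideal_add: "ideal I \<Longrightarrow> x \<in> I \<Longrightarrow> y \<in> I \<Longrightarrow> x + y \<in> I"
  unfolding ideal_def by blast
lemma ideal_mult: "ideal I \<Longrightarrow> x \<in> I \<Longrightarrow> r * x \<in> I"
  unfolding ideal_def by blast

lemma compact_general:
  fixes \<sigma> :: "'a::{comm_semiring_0,comm_monoid_mult} set set"
  assumes id: "\<forall>x\<in>\<sigma>. ideal x" and mx: "\<And>M. maximal_ideal M \<Longrightarrow> M \<in> \<sigma>"
  shows "compact_space (ideal_topology \<sigma>)"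
proof -
  define S where "S = insert \<sigma> {\<sigma> - up_set \<sigma> a | a. ideal a}"
  have sub: "\<forall>s\<in>S. s \<subseteq> \<sigma>" unfolding S_def by blast
  have s1: "\<sigma> \<in> S" unfolding S_def by (rule insertI1)
  have US: "\<Union>S = \<sigma>" using sub s1 by blast
  have top: "topspace (ideal_topology \<sigma>) = \<sigma>"
    unfolding ideal_topology_def S_def[symmetric] using US by simp
  have e1: "finite' intersection_of (\<lambda>x. x \<in> S) = (finite intersection_of (\<lambda>x. x \<in> S) relative_to \<Union>S)"
    using fin_rel_eq[OF s1 sub] .
  show ?thesis
  proof (rule Alexander_subbase[where \<B> = S])
    show "topology (arbitrary union_of (finite intersection_of (\<lambda>x. x \<in> S) relative_to \<Union>S))
        = ideal_topology \<sigma>"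
      unfolding ideal_topology_def S_def[symmetric] generate_topology_on_eq e1 by (rule refl)
  next
    fix C assume CS: "C \<subseteq> S" and UC: "\<Union>C = topspace (ideal_topology \<sigma>)"
    show "\<exists>C'. finite C' \<and> C' \<subseteq> C \<and> \<Union>C' = topspace (ideal_topology \<sigma>)"
    proof (cases "\<sigma> \<in> C")
      case True then show ?thesis using top by (intro exI[of _ "{\<sigma>}"]) auto
    next
      case False
      show ?thesis
      proof (rule ccontr)
        assume nf: "\<not> ?thesis"
        define A where "A = {a. ideal a \<and> \<sigma> - up_set \<sigma> a \<in> C}"
        have nc: "\<exists>x\<in>\<sigma>. \<forall>a\<in>F. a \<subseteq> x" if F: "finite F" "F \<subseteq> A" for F
        proof -
          let ?C' = "(\<lambda>a. \<sigma> - up_set \<sigma> a) ` F"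
          have f1: "finite ?C'" using F by simp
          have f2: "?C' \<subseteq> C" using F unfolding A_def by blast
          have "\<Union>?C' \<noteq> \<sigma>"
          proof
            assume "\<Union>?C' = \<sigma>"
            then have "finite ?C' \<and> ?C' \<subseteq> C \<and> \<Union>?C' = topspace (ideal_topology \<sigma>)"
              using f1 f2 top by simp
            then show False using nf by blast
          qed
          moreover have "\<Union>?C' \<subseteq> \<sigma>" by blast
          ultimately obtain x where "x \<in> \<sigma>" "x \<notin> \<Union>?C'" by blast
          then have "\<forall>a\<in>F. a \<subseteq> x" unfolding up_set_def by blast
          then show ?thesis using \<open>x \<in> \<sigma>\<close> by blast
        qed
        define J where "J = {y. \<exists>F. finite F \<and> F \<subseteq> A \<and> (\<forall>x\<in>\<sigma>. (\<forall>a\<in>F. a \<subseteq> x) \<longrightarrow> y \<in> x)}"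
        have "ideal J" unfolding ideal_def
        proof (intro conjI ballI allI)
          have "\<forall>x\<in>\<sigma>. (\<forall>a\<in>{}. a \<subseteq> x) \<longrightarrow> 0 \<in> x" using id ideal_zero by blast
          then have "0 \<in> J" unfolding J_def mem_Collect_eq by (intro exI[of _ "{}"]) simp
          then show "J \<noteq> {}" by blast
          have "1 \<notin> J"
          proof
            assume "1 \<in> J"
            then obtain F where F: "finite F" "F \<subseteq> A" "\<forall>x\<in>\<sigma>. (\<forall>a\<in>F. a \<subseteq> x) \<longrightarrow> 1 \<in> x"
              unfolding J_def by blast
            obtain x where x: "x \<in> \<sigma>" "\<forall>a\<in>F. a \<subseteq> x" using nc[OF F(1) F(2)] by blast
            have "1 \<in> x" using F(3) x by blast
            moreover have "ideal x" using id x by blast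
            ultimately show False using one_notin_ideal by blast
          qed
          then show "J \<noteq> UNIV" by blast
        next
          fix y z assume yz: "y \<in> J" "z \<in> J"
          obtain F where F: "finite F" "F \<subseteq> A" "\<forall>x\<in>\<sigma>. (\<forall>a\<in>F. a \<subseteq> x) \<longrightarrow> y \<in> x"
            using yz(1) unfolding J_def by blast
          obtain G where G: "finite G" "G \<subseteq> A" "\<forall>x\<in>\<sigma>. (\<forall>a\<in>G. a \<subseteq> x) \<longrightarrow> z \<in> x"
            using yz(2) unfolding J_def by blast
          have "\<forall>x\<in>\<sigma>. (\<forall>a\<in>F \<union> G. a \<subseteq> x) \<longrightarrow> y + z \<in> x"
          proof (intro ballI impI)
            fix x assume x: "x \<in> \<sigma>" "\<forall>a\<in>F \<union> G. a \<subseteq> x"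
            have "y \<in> x" using F(3) x by blast
            moreover have "z \<in> x" using G(3) x by blast
            moreover have "ideal x" using id x by blast
            ultimately show "y + z \<in> x" using ideal_add by blast
          qed
          moreover have "finite (F \<union> G)" "F \<union> G \<subseteq> A" using F G by auto
          ultimately show "y + z \<in> J" unfolding J_def mem_Collect_eq by (intro exI[of _ "F \<union> G"]) simp
        next
          fix r y assume "y \<in> J"
          then obtain F where F: "finite F" "F \<subseteq> A" "\<forall>x\<in>\<sigma>. (\<forall>a\<in>F. a \<subseteq> x) \<longrightarrow> y \<in> x"
            unfolding J_def by blast
          have "\<forall>x\<in>\<sigma>. (\<forall>a\<in>F. a \<subseteq> x) \<longrightarrow> r * y \<in> x"
          proof (intro ballI impI)
            fix x assume x: "x \<in> \<sigma>" "\<forall>a\<in>F. a \<subseteq> x"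
            then have "y \<in> x" using F(3) by blast
            then show "r * y \<in> x" using id x ideal_mult by blast
          qed
          then show "r * y \<in> J" unfolding J_def mem_Collect_eq using F(1,2) by (intro exI[of _ F]) simp
        qed
        then obtain M where M: "maximal_ideal M" "J \<subseteq> M" using exists_maximal by blast
        have AJ: "a \<subseteq> J" if "a \<in> A" for a
        proof
          fix y assume "y \<in> a"
          then have "\<forall>x\<in>\<sigma>. (\<forall>b\<in>{a}. b \<subseteq> x) \<longrightarrow> y \<in> x" by blast
          moreover have "finite {a}" "{a} \<subseteq> A" using that by auto
          ultimately show "y \<in> J" unfolding J_def by blast
        qed
        have "M \<in> \<sigma>" using mx M by blast
        then obtain c where c: "c \<in> C" "M \<in> c" using UC top by blast
        have "c \<in> S" using c CS by blast
        moreover have "c \<noteq> \<sigma>" using False c by blast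
        ultimately obtain a where a: "ideal a" "c = \<sigma> - up_set \<sigma> a" unfolding S_def by blast
        then have "a \<in> A" unfolding A_def using c by blast
        then have "a \<subseteq> M" using AJ M by blast
        then show False using c a \<open>M \<in> \<sigma>\<close> unfolding up_set_def by blast
      qed
    qed
  qed
qed

theorem corollary3p4:
  shows "compact_space (ideal_topology {M :: 'a::{comm_semiring_0,comm_monoid_mult} set. maximal_ideal M})
       \<and> compact_space (ideal_topology {P :: 'a set. prime_ideal P})
       \<and> compact_space (ideal_topology {A :: 'a set. strongly_irreducible_ideal A})
       \<and> compact_space (ideal_topology {A :: 'a set. primary_ideal A})
       \<and> compact_space (ideal_topology {A :: 'a set. irreducible_ideal A})
       \<and> compact_space (ideal_topology {A :: 'a set. radical_ideal A})"
proof (intro conjI compact_general ballI)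
  fix M :: "'a set" assume "maximal_ideal M"
  then show "M \<in> {M. maximal_ideal M}" "M \<in> {P. prime_ideal P}"
    "M \<in> {A. strongly_irreducible_ideal A}" "M \<in> {A. primary_ideal A}"
    "M \<in> {A. irreducible_ideal A}" "M \<in> {A. radical_ideal A}"
    using maximal_all by auto
next
  fix x :: "'a set"
  show "x \<in> {M. maximal_ideal M} \<Longrightarrow> ideal x" by (simp add: maximal_ideal_def)
  show "x \<in> {M. prime_ideal M} \<Longrightarrow> ideal x" by (simp add: prime_ideal_def)
  show "x \<in> {M. strongly_irreducible_ideal M} \<Longrightarrow> ideal x" by (simp add: strongly_irreducible_ideal_def)
  show "x \<in> {M. primary_ideal M} \<Longrightarrow> ideal x" by (simp add: primary_ideal_def)
  show "x \<in> {M. irreducible_ideal M} \<Longrightarrow> ideal x" by (simp add: irreducible_ideal_def)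
  show "x \<in> {M. radical_ideal M} \<Longrightarrow> ideal x" by (simp add: radical_ideal_def)
qed

end
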